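(* Let $\mathcal{L}$ be a square lattice, let $\beta$ be a maximal element of $J(\mathcal{L})$, and let $\alpha \in \mathcal{L}_\beta$. Then \[ |E_\alpha \setminus E_\alpha(\mathcal{L}_\beta)| = |E_\alpha| - |E_\alpha(\mathcal{L}_\beta)| \geq |\mathcal{L}| - |\mathcal{L}_\beta| - 1. \]
   Context: All lattices are finite distributive. $x \in \mathcal{L}$ is join-irreducible if $x = y\vee z$ implies $x=y$ or $x=z$ (so the minimum, the root, is join-irreducible); $J(\mathcal{L})$ is the poset of join-irreducibles. $\mathcal{L}$ is a tree lattice if the Hasse diagram of $J(\mathcal{L})$ is a tree; a square lattice is a tree lattice in which every vertex of this Hasse diagram other than the root has degree at most two. For a maximal $\beta \in J(\mathcal{L})$, the pruning $\mathcal{L}_\beta$ is the lattice of hereditary subsets of $J(\mathcal{L})\setminus\{\beta\}$, identified (via Birkhoff's theorem) with the sublattice $\{\gamma \in \mathcal{L} : \gamma \not\geq \beta\}$ of $\mathcal{L}$. A diamond in a lattice $\mathcal{M}$ is a set $\{x, y, x\vee y, x\wedge y\}$ with $x, y \in \mathcal{M}$ non-comparable. For $\alpha \in \mathcal{M}$, $E_\alpha(\mathcal{M}) = \{(\alpha,\gamma) : \text{some diamond of } \mathcal{M} \text{ contains both } \alpha \text{ and } \gamma\}$, and $E_\alpha = E_\alpha(\mathcal{L})$. *)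

theory Defs
  imports Main
begin

text \<open>The finite distributive lattice L is the universe of a type of class
  finite and distributive_lattice.\<close>

definition join_irr :: "'a::lattice \<Rightarrow> bool" where
  "join_irr x \<longleftrightarrow> (\<forall>y z. x = sup y z \<longrightarrow> x = y \<or> x = z)"

definition JI :: "'a::lattice set" where
  "JI = {x. join_irr x}"

definition hasse_cover :: "'a::lattice \<Rightarrow> 'a \<Rightarrow> bool" where
  "hasse_cover x y \<longleftrightarrow> x \<in> JI \<and> y \<in> JI \<and> x < y \<and> \<not> (\<exists>z\<in>JI. x < z \<and> z < y)"

definition hasse_adj :: "'a::lattice \<Rightarrow> 'a \<Rightarrow> bool" where
  "hasse_adj x y \<longleftrightarrow> hasse_cover x y \<or> hasse_cover y x"

definition hasse_connected :: "'a::lattice itself \<Rightarrow> bool" where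
  "hasse_connected _ \<longleftrightarrow>
     (\<forall>x\<in>(JI::'a set). \<forall>y\<in>JI. (x, y) \<in> {(u, v). hasse_adj u v}\<^sup>*)"

definition is_hasse_cycle :: "'a::lattice list \<Rightarrow> bool" where
  "is_hasse_cycle vs \<longleftrightarrow> length vs \<ge> 3 \<and> distinct vs \<and> set vs \<subseteq> JI \<and>
     (\<forall>i. Suc i < length vs \<longrightarrow> hasse_adj (vs ! i) (vs ! Suc i)) \<and>
     hasse_adj (last vs) (hd vs)"

definition tree_lattice :: "'a::lattice itself \<Rightarrow> bool" where
  "tree_lattice T \<longleftrightarrow> hasse_connected T \<and> \<not> (\<exists>vs::'a list. is_hasse_cycle vs)"

definition hasse_degree :: "'a::{finite,lattice} \<Rightarrow> nat" where
  "hasse_degree v = card {u \<in> JI. hasse_adj u v}"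

text \<open>Square lattice: tree lattice where each vertex other than the root
  (the minimum of J(L), i.e. each non-minimal vertex) has degree at most 2.\<close>
definition square_lattice :: "'a::{finite,lattice} itself \<Rightarrow> bool" where
  "square_lattice T \<longleftrightarrow> tree_lattice T \<and>
     (\<forall>v\<in>(JI::'a set). (\<exists>u\<in>JI. u < v) \<longrightarrow> hasse_degree v \<le> 2)"

definition pruning :: "'a::lattice \<Rightarrow> 'a set" where
  "pruning \<beta> = {\<gamma>. \<not> \<beta> \<le> \<gamma>}"

definition diamond_edges :: "'a::lattice \<Rightarrow> 'a set \<Rightarrow> ('a \<times> 'a) set" where
  "diamond_edges \<alpha> M = {(a, g). a = \<alpha> \<and>
     (\<exists>x\<in>M. \<exists>y\<in>M. \<not> x \<le> y \<and> \<not> y \<le> x \<and>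
        \<alpha> \<in> {x, y, sup x y, inf x y} \<and> g \<in> {x, y, sup x y, inf x y})}"

end

theory Submission
  imports Defs
begin

lemma least_ex: "\<exists>m::'a::{finite,lattice}. \<forall>x. m \<le> x"
proof -
  obtain m :: 'a where m: "\<forall>b\<in>UNIV. b \<le> m \<longrightarrow> m = b"
    using finite_has_minimal[of "UNIV::'a set"] by auto
  have "\<forall>x. m \<le> x"
  proof
    fix x
    have "inf m x = m" using m[rule_format, OF UNIV_I, of "inf m x"] by simp
    thus "m \<le> x" by (metis inf.absorb_iff1)
  qed
  thus ?thesis by blast
qed

lemma rep:
  fixes x y :: "'a::{finite,lattice}"
  assumes "\<not> x \<le> y"
  shows "\<exists>j\<in>JI. j \<le> x \<and> \<not> j \<le> y"
proof -
  let ?A = "{z. z \<le> x \<and> \<not> z \<le> y}"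
  obtain z where z: "z \<in> ?A" and zm: "\<forall>b\<in>?A. b \<le> z \<longrightarrow> z = b"
    using finite_has_minimal[of ?A] assms by auto
  have "join_irr z"
    unfolding join_irr_def
  proof (intro allI impI)
    fix a b assume ab: "z = sup a b"
    show "z = a \<or> z = b"
    proof (rule ccontr)
      assume "\<not> (z = a \<or> z = b)"
      hence na: "z \<noteq> a" "z \<noteq> b" by auto
      have "a \<le> z" "b \<le> z" using ab by auto
      hence "a \<le> x" "b \<le> x" using z by auto
      have "a \<le> y" using zm na \<open>a \<le> z\<close> \<open>a \<le> x\<close> by blast
      moreover have "b \<le> y" using zm na \<open>b \<le> z\<close> \<open>b \<le> x\<close> by blast
      ultimately have "z \<le> y" using ab by auto
      thus False using z by auto
    qed
  qed
  thus ?thesis using z unfolding JI_def by auto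
qed

lemma jprime:
  fixes j x y :: "'a::distrib_lattice"
  assumes "j \<in> JI" "j \<le> sup x y"
  shows "j \<le> x \<or> j \<le> y"
proof -
  have "j = inf j (sup x y)" using assms(2) by (simp add: inf.absorb1)
  also have "\<dots> = sup (inf j x) (inf j y)" by (rule inf_sup_distrib1)
  finally have "j = inf j x \<or> j = inf j y" using assms(1) unfolding JI_def join_irr_def by blast
  thus ?thesis by (metis inf.absorb_iff1)
qed

lemma spider:
  fixes i u k1 k2 :: "'a::{finite,lattice}"
  assumes sq: "square_lattice TYPE('a)"
    and "i \<in> JI" "u \<in> JI" "u < i" "k1 \<in> JI" "k2 \<in> JI" "i \<le> k1" "i \<le> k2"
  shows "k1 \<le> k2 \<or> k2 \<le> k1"
proof (rule ccontr)
  assume nc: "\<not> (k1 \<le> k2 \<or> k2 \<le> k1)"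
  let ?C = "{c\<in>JI. i \<le> c \<and> c \<le> k1 \<and> c \<le> k2}"
  obtain c where c: "c \<in> ?C" and cm: "\<forall>b\<in>?C. c \<le> b \<longrightarrow> c = b"
  proof -
    have "i \<in> ?C" using assms(2,7,8) by simp
    thus ?thesis using that finite_has_maximal2[of ?C i] by auto
  qed
  let ?L = "{z\<in>JI. z < c}"
  have "u \<in> ?L" using assms(3,4) c by (auto intro: less_le_trans)
  then obtain l where l: "l \<in> ?L" and lm: "\<forall>b\<in>?L. l \<le> b \<longrightarrow> l = b"
    using finite_has_maximal[of ?L] by auto
  have cl: "hasse_cover l c" unfolding hasse_cover_def using l lm c
    by (metis (no_types, lifting) less_le mem_Collect_eq order.strict_trans)
  have ck1: "c < k1" using c nc by (metis (no_types, lifting) mem_Collect_eq order.order_iff_strict)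
  have ck2: "c < k2" using c nc by (metis (no_types, lifting) mem_Collect_eq order.order_iff_strict)
  let ?U1 = "{z\<in>JI. c < z \<and> z \<le> k1}"
  obtain u1 where u1: "u1 \<in> ?U1" and u1m: "\<forall>b\<in>?U1. b \<le> u1 \<longrightarrow> u1 = b"
  proof -
    have "k1 \<in> ?U1" using ck1 assms(5) by simp
    moreover have "finite ?U1" by simp
    ultimately show ?thesis using that finite_has_minimal2[of ?U1 k1] by blast
  qed
  let ?U2 = "{z\<in>JI. c < z \<and> z \<le> k2}"
  obtain u2 where u2: "u2 \<in> ?U2" and u2m: "\<forall>b\<in>?U2. b \<le> u2 \<longrightarrow> u2 = b"
  proof -
    have "k2 \<in> ?U2" using ck2 assms(6) by simp
    moreover have "finite ?U2" by simp
    ultimately show ?thesis using that finite_has_minimal2[of ?U2 k2] by blast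
  qed
  have cu1: "hasse_cover c u1" unfolding hasse_cover_def using u1 u1m c
    by (metis (no_types, lifting) less_le mem_Collect_eq order.strict_trans order_trans)
  have cu2: "hasse_cover c u2" unfolding hasse_cover_def using u2 u2m c
    by (metis (no_types, lifting) less_le mem_Collect_eq order.strict_trans order_trans)
  have "u1 \<noteq> u2"
  proof
    assume "u1 = u2"
    hence "u1 \<in> ?C" using u1 u2 c by auto
    thus False using cm u1 c by (metis (no_types, lifting) less_le mem_Collect_eq)
  qed
  have sub: "{l, u1, u2} \<subseteq> {v \<in> JI. hasse_adj v c}"
    using cl cu1 cu2 l u1 u2 unfolding hasse_adj_def by auto
  have "card {l, u1, u2} = 3" using \<open>u1 \<noteq> u2\<close> l u1 u2
    by (auto simp: card_insert_if)
  hence "3 \<le> hasse_degree c" unfolding hasse_degree_def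
    using card_mono[OF _ sub] by simp
  moreover have "hasse_degree c \<le> 2"
    using sq c l unfolding square_lattice_def by auto
  ultimately show False by simp
qed

lemma de_intro:
  "x \<in> M \<Longrightarrow> y \<in> M \<Longrightarrow> \<not> x \<le> y \<Longrightarrow> \<not> y \<le> x \<Longrightarrow> \<alpha> \<in> {x, y, sup x y, inf x y}
   \<Longrightarrow> g \<in> {x, y, sup x y, inf x y} \<Longrightarrow> (\<alpha>, g) \<in> diamond_edges \<alpha> M"
  unfolding diamond_edges_def by blast

lemma de_elim:
  "(a, g) \<in> diamond_edges \<alpha> M \<Longrightarrow> \<exists>x\<in>M. \<exists>y\<in>M. g \<in> {x, y, sup x y, inf x y}"
  unfolding diamond_edges_def by blast

theorem mainTheorem9:
  fixes \<beta> \<alpha> :: "'a::{finite,distrib_lattice}"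
  assumes "square_lattice TYPE('a)"
    and "\<beta> \<in> JI" and "\<forall>x\<in>JI. \<beta> \<le> x \<longrightarrow> x = \<beta>"
    and "\<alpha> \<in> pruning \<beta>"
  shows "int (card (diamond_edges \<alpha> UNIV - diamond_edges \<alpha> (pruning \<beta>)))
           = int (card (diamond_edges \<alpha> UNIV)) - int (card (diamond_edges \<alpha> (pruning \<beta>)))
       \<and> int (card (diamond_edges \<alpha> UNIV)) - int (card (diamond_edges \<alpha> (pruning \<beta>)))
           \<ge> int (card (UNIV :: 'a set)) - int (card (pruning \<beta>)) - 1"
proof -
  let ?E = "diamond_edges \<alpha> (UNIV::'a set)"
  let ?E' = "diamond_edges \<alpha> (pruning \<beta>)"
  let ?P = "pruning \<beta>"
  define \<delta> where "\<delta> = sup \<alpha> \<beta>"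
  have sub: "?E' \<subseteq> ?E" unfolding diamond_edges_def by blast
  have eq1: "card (?E - ?E') = card ?E - card ?E'"
    by (rule card_Diff_subset[OF _ sub]) simp
  have le: "card ?E' \<le> card ?E" by (rule card_mono[OF _ sub]) simp
  have na: "\<not> \<beta> \<le> \<alpha>" using assms(4) unfolding pruning_def by auto
  obtain m :: 'a where m: "\<forall>x. m \<le> x" using least_ex by blast
  have mJ: "m \<in> JI" unfolding JI_def join_irr_def
  proof (intro CollectI allI impI)
    fix y z assume "m = sup y z"
    hence "y \<le> m" by simp
    hence "m = y" using m[rule_format, of y] by (rule order.antisym[symmetric])
    thus "m = y \<or> m = z" by simp
  qed
  have Pclosed: "sup x y \<in> ?P \<and> inf x y \<in> ?P" if "x \<in> ?P" "y \<in> ?P" for x y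
  proof -
    have "\<not> \<beta> \<le> x" "\<not> \<beta> \<le> y" using that unfolding pruning_def by auto
    hence "\<not> \<beta> \<le> sup x y" using jprime[OF assms(2), of x y] by blast
    moreover have "\<not> \<beta> \<le> inf x y" using \<open>\<not> \<beta> \<le> x\<close> le_inf_iff by blast
    ultimately show ?thesis unfolding pruning_def by simp
  qed
  let ?T = "(\<lambda>g. (\<alpha>, g)) ` (- ?P - {\<delta>})"
  have TE: "?T \<subseteq> ?E - ?E'"
  proof
    fix p assume "p \<in> ?T"
    then obtain g where p: "p = (\<alpha>, g)" and g: "g \<notin> ?P" "g \<noteq> \<delta>" by auto
    have bg: "\<beta> \<le> g" using g unfolding pruning_def by auto
    have notE': "p \<notin> ?E'"
    proof
      assume "p \<in> ?E'"
      then obtain x y where xy: "x \<in> ?P" "y \<in> ?P" "g \<in> {x, y, sup x y, inf x y}"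
        unfolding p by (blast dest: de_elim)
      have "g \<in> ?P" using xy Pclosed[OF xy(1,2)] by blast
      thus False using g by blast
    qed
    have inE: "p \<in> ?E"
    proof (cases "\<alpha> \<le> g")
      case False
      have "\<not> g \<le> \<alpha>" using bg na order_trans by blast
      thus ?thesis unfolding p using False by (intro de_intro) auto
    next
      case True
      have dg: "\<delta> \<le> g" using True bg unfolding \<delta>_def by simp
      let ?Y = "{y. \<alpha> \<le> y \<and> y \<le> g \<and> inf y \<delta> = \<alpha>}"
      have "\<alpha> \<in> ?Y" using True unfolding \<delta>_def by (simp add: inf.absorb1)
      then obtain Y where Y: "Y \<in> ?Y" and Ym: "\<forall>b\<in>?Y. Y \<le> b \<longrightarrow> Y = b"
        using finite_has_maximal2[of ?Y \<alpha>] by auto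
      have YD: "sup Y \<delta> = g"
      proof (rule ccontr)
        assume ne: "sup Y \<delta> \<noteq> g"
        have "sup Y \<delta> \<le> g" using Y dg by auto
        hence "\<not> g \<le> sup Y \<delta>" using ne order.antisym by blast
        then obtain j where j: "j \<in> JI" "j \<le> g" "\<not> j \<le> sup Y \<delta>" using rep by blast
        have jd: "inf j \<delta> \<le> \<alpha>"
        proof (rule ccontr)
          assume "\<not> inf j \<delta> \<le> \<alpha>"
          then obtain i where i: "i \<in> JI" "i \<le> inf j \<delta>" "\<not> i \<le> \<alpha>" using rep by blast
          have "i \<le> \<alpha> \<or> i \<le> \<beta>" using jprime[OF i(1)] i(2) unfolding \<delta>_def by auto
          hence ib: "i \<le> \<beta>" using i by auto
          have "m \<noteq> i" using m i by auto
          hence mi: "m < i" using m by (simp add: less_le)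
          have "j \<le> \<beta> \<or> \<beta> \<le> j"
            by (rule spider[OF assms(1) i(1) mJ mi j(1) assms(2)]) (use i ib in auto)
          hence "j \<le> \<beta>" using assms(3) j(1) by auto
          thus False using j(3) unfolding \<delta>_def by (meson order_trans sup_ge2)
        qed
        define Y' where "Y' = sup Y j"
        have "inf Y' \<delta> = sup (inf Y \<delta>) (inf j \<delta>)" unfolding Y'_def by (rule inf_sup_distrib2)
        also have "\<dots> = \<alpha>" using Y jd by (simp add: sup.absorb1)
        finally have "Y' \<in> ?Y" using Y j unfolding Y'_def by (auto intro: le_supI1)
        moreover have "Y \<le> Y'" unfolding Y'_def by simp
        ultimately have "Y = Y'" using Ym by blast
        hence "j \<le> Y" unfolding Y'_def by (metis sup_ge2)
        thus False using j(3) by (meson order_trans sup_ge1)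
      qed
      have YI: "inf \<delta> Y = \<alpha>" using Y by (simp add: inf_commute)
      have n1: "\<not> \<delta> \<le> Y"
      proof
        assume "\<delta> \<le> Y"
        hence "\<delta> = \<alpha>" using YI by (simp add: inf.absorb1)
        thus False using na unfolding \<delta>_def by (metis sup_ge2)
      qed
      have n2: "\<not> Y \<le> \<delta>"
      proof
        assume "Y \<le> \<delta>"
        hence "g = \<delta>" using YD by (simp add: sup.absorb2)
        thus False using g by simp
      qed
      have "sup \<delta> Y = g" using YD by (simp add: sup_commute)
      thus ?thesis unfolding p using n1 n2 YI by (intro de_intro[of \<delta> _ Y]) auto
    qed
    show "p \<in> ?E - ?E'" using inE notE' by auto
  qed
  have "card ?T = card (- ?P - {\<delta>})" by (rule card_image) (auto simp: inj_on_def)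
  also have "\<dots> \<ge> card (- ?P) - 1" by (simp add: card_Diff_singleton_if)
  finally have c1: "card (- ?P) - 1 \<le> card (?E - ?E')" using card_mono[OF _ TE] by simp
  have "card (- ?P) = card (UNIV::'a set) - card ?P"
    by (simp add: Compl_eq_Diff_UNIV card_Diff_subset)
  moreover have "card ?P \<le> card (UNIV::'a set)" by (rule card_mono) auto
  ultimately have "int (card (UNIV::'a set)) - int (card ?P) - 1 \<le> int (card (?E - ?E'))"
    using c1 by linarith
  thus ?thesis using eq1 le by simp
qed

end
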